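(* Let $X$ be a set, $\mathcal C\subseteq\mathcal P(X)$ closed under intersections (if $(K_i)_{i\in I}\subseteq\mathcal C$ then $\bigcap_{i\in I}K_i\in\mathcal C$), and $T:\mathcal C\to\mathcal C$ an order reversing quasi involution on $\mathcal C$. Fix $M_0\in\mathcal C$ and let $\mathcal C_0=\{K\cap M_0: K\in\mathcal C\}$. Then $\mathcal C_0\subseteq\mathcal C$, and the map $S:\mathcal C_0\to\mathcal C_0$ defined by $SK=TK\cap M_0$ is an order reversing quasi involution on $\mathcal C_0$.
   Context: $\mathcal P(X)$ is the power set of $X$. For $\mathcal D\subseteq\mathcal P(X)$, a map $T:\mathcal D\to\mathcal D$ is an order reversing quasi involution on $\mathcal D$ if for all $K,L\in\mathcal D$: (i) $K\subseteq TTK$, and (ii) $L\subseteq K$ implies $TK\subseteq TL$. *)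

theory Defs
  imports Main
begin

definition order_rev_quasi_inv :: "'a set set \<Rightarrow> ('a set \<Rightarrow> 'a set) \<Rightarrow> bool" where
  "order_rev_quasi_inv D T \<longleftrightarrow>
     (\<forall>K\<in>D. T K \<in> D) \<and>
     (\<forall>K\<in>D. K \<subseteq> T (T K)) \<and>
     (\<forall>K\<in>D. \<forall>L\<in>D. L \<subseteq> K \<longrightarrow> T K \<subseteq> T L)"

end

theory Submission
  imports Defs
begin

theorem proposition8p13:
  fixes X :: "'a set" and C :: "'a set set" and T :: "'a set \<Rightarrow> 'a set" and M0 :: "'a set"
  assumes "C \<subseteq> Pow X"
    and "\<And>F. F \<subseteq> C \<Longrightarrow> X \<inter> \<Inter>F \<in> C"
    and "order_rev_quasi_inv C T"
    and "M0 \<in> C"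
  shows "{K \<inter> M0 | K. K \<in> C} \<subseteq> C \<and>
         order_rev_quasi_inv {K \<inter> M0 | K. K \<in> C} (\<lambda>K. T K \<inter> M0)"
proof -
  have T1: "\<And>K. K \<in> C \<Longrightarrow> T K \<in> C" and T2: "\<And>K. K \<in> C \<Longrightarrow> K \<subseteq> T (T K)"
    and T3: "\<And>K L. K \<in> C \<Longrightarrow> L \<in> C \<Longrightarrow> L \<subseteq> K \<Longrightarrow> T K \<subseteq> T L"
    using assms(3) unfolding order_rev_quasi_inv_def by (simp_all add: Ball_def)
  have int: "K \<inter> M0 \<in> C" if "K \<in> C" for K
  proof -
    have "X \<inter> \<Inter>{K, M0} \<in> C" using assms(2)[of "{K, M0}"] that assms(4) by blast
    moreover have "X \<inter> \<Inter>{K, M0} = K \<inter> M0" using that assms(1) by blast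
    ultimately show ?thesis by simp
  qed
  have sub: "{K \<inter> M0 | K. K \<in> C} \<subseteq> C" using int by auto
  have "order_rev_quasi_inv {K \<inter> M0 | K. K \<in> C} (\<lambda>K. T K \<inter> M0)"
    unfolding order_rev_quasi_inv_def
  proof (intro conjI ballI impI)
    fix K assume "K \<in> {K \<inter> M0 | K. K \<in> C}"
    then have "K \<in> C" using sub by (meson subsetD)
    then show "T K \<inter> M0 \<in> {K \<inter> M0 | K. K \<in> C}" using T1 by auto
  next
    fix K assume K: "K \<in> {K \<inter> M0 | K. K \<in> C}"
    then obtain K' where K': "K' \<in> C" "K = K' \<inter> M0" by blast
    have KC: "K \<in> C" using int K' by simp
    have KM: "K \<subseteq> M0" using K' by simp
    have "T K \<inter> M0 \<in> C" using int[OF T1[OF KC]] .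
    moreover have "T K \<inter> M0 \<subseteq> T K" by blast
    ultimately have "T (T K) \<subseteq> T (T K \<inter> M0)" using T3[OF T1[OF KC]] by blast
    then show "K \<subseteq> T (T K \<inter> M0) \<inter> M0" using T2[OF KC] KM by blast
  next
    fix K L assume a: "K \<in> {K \<inter> M0 | K. K \<in> C}" "L \<in> {K \<inter> M0 | K. K \<in> C}" "L \<subseteq> K"
    have "K \<in> C" "L \<in> C" using a(1,2) sub by (meson subsetD)+
    then have "T K \<subseteq> T L" using T3 a(3) by simp
    then show "T K \<inter> M0 \<subseteq> T L \<inter> M0" by blast
  qed
  with sub show ?thesis by blast
qed

end
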